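(* Let $\alpha>0$ be an ordinal and let $\mathcal{X}\in\mathfrak{C}_\alpha$. Then there is a countable collection $\{\mathcal{Y}_m\}_{m=1}^\infty$ of families of metric spaces such that for every $R\in\mathbb{R}^{\mathbb{N}}$ there is an $n$ with $\mathcal{X}\xrightarrow{R}\mathcal{Y}_n$ and $\mathcal{Y}_n\in\mathfrak{C}_\beta$ for some $\beta<\alpha$.
   Context: A family $\mathcal{U}$ of metric subspaces of a metric space $(X,d)$ is $r$-disjoint if $d(x,y)>r$ whenever $x\in U$, $y\in U'$, $U\neq U'$ in $\mathcal{U}$. For families $\mathcal{X},\mathcal{Y}$ and $R\in\mathbb{R}^{\mathbb{N}}$, $\mathcal{X}\xrightarrow{R}\mathcal{Y}$ means: there is an integer $k$ such that for each $X\in\mathcal{X}$ there are subcollections $\mathcal{U}_1,\dots,\mathcal{U}_k\subseteq\mathcal{Y}$ of subspaces of $X$, each $\mathcal{U}_i$ being $R_i$-disjoint, with $\bigcup_i\mathcal{U}_i$ covering $X$. A family is bounded if the diameters of its members are uniformly bounded. $\mathfrak{C}_0$ is the class of bounded families; for an ordinal $\alpha>0$, $\mathfrak{C}_\alpha$ is the class of families $\mathcal{X}$ such that for every $R\in\mathbb{R}^{\mathbb{N}}$ there exist $\beta<\alpha$ and $\mathcal{Y}\in\mathfrak{C}_\beta$ with $\mathcal{X}\xrightarrow{R}\mathcal{Y}$. *)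

theory Defs
  imports "HOL-Analysis.Analysis"
begin

definition is_subspace :: "'a metric \<Rightarrow> 'a metric \<Rightarrow> bool" where
  "is_subspace U X \<longleftrightarrow> mspace U \<subseteq> mspace X \<and> U = submetric X (mspace U)"

definition r_disjoint :: "real \<Rightarrow> 'a metric \<Rightarrow> 'a metric set \<Rightarrow> bool" where
  "r_disjoint r X \<U> \<longleftrightarrow>
     (\<forall>U\<in>\<U>. \<forall>U'\<in>\<U>. U \<noteq> U' \<longrightarrow>
        (\<forall>x\<in>mspace U. \<forall>y\<in>mspace U'. mdist X x y > r))"

definition bounded_family :: "'a metric set \<Rightarrow> bool" where
  "bounded_family \<X> \<longleftrightarrow>
     (\<exists>B. \<forall>M\<in>\<X>. \<forall>x\<in>mspace M. \<forall>y\<in>mspace M. mdist M x y \<le> B)"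

text \<open>The relation X --R--> Y; the sequence R is indexed by the positive naturals 1,2,...\<close>
definition decomposes :: "'a metric set \<Rightarrow> (nat \<Rightarrow> real) \<Rightarrow> 'a metric set \<Rightarrow> bool" where
  "decomposes \<X> R \<Y> \<longleftrightarrow>
     (\<exists>k::nat. \<forall>X\<in>\<X>. \<exists>\<U>::nat \<Rightarrow> 'a metric set.
        (\<forall>i\<in>{1..k}. \<U> i \<subseteq> \<Y> \<and> (\<forall>U\<in>\<U> i. is_subspace U X) \<and> r_disjoint (R i) X (\<U> i))
        \<and> mspace X \<subseteq> (\<Union>i\<in>{1..k}. \<Union>U\<in>\<U> i. mspace U))"

text \<open>The classes C_alpha, for alpha ranging over a well-ordered type 'o (every ordinal is
  represented as an element of some well-ordered type; the definition of C_alpha only depends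
  on the initial segment below alpha).\<close>
definition C_class :: "'o::wellorder \<Rightarrow> 'a metric set set" where
  "C_class = wfrec {(x, y). x < y}
     (\<lambda>f \<alpha>. if (\<forall>\<beta>. \<not> \<beta> < \<alpha>) then {\<X>. bounded_family \<X>}
            else {\<X>. \<forall>R. \<exists>\<beta>. \<beta> < \<alpha> \<and> (\<exists>\<Y>. \<Y> \<in> f \<beta> \<and> decomposes \<X> R \<Y>)})"

lemma C_class_unfold:
  "C_class \<alpha> = (if (\<forall>\<beta>. \<not> \<beta> < \<alpha>) then {\<X>. bounded_family \<X>}
            else {\<X>. \<forall>R. \<exists>\<beta>. \<beta> < \<alpha> \<and> (\<exists>\<Y>. \<Y> \<in> C_class \<beta> \<and> decomposes \<X> R \<Y>)})"
  unfolding C_class_def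
  apply (subst wfrec[OF wf])
  apply (simp only: cut_def)
  apply (simp cong: conj_cong)
  done

end

theory Submission
  imports Defs "HOL-Library.Countable"
begin

lemma r_disjoint_mono:
  assumes "r \<le> r'" "r_disjoint r' X U" shows "r_disjoint r X U"
  using assms unfolding r_disjoint_def by (meson le_less_trans)

definition Pgood :: "'a metric set \<Rightarrow> nat list \<Rightarrow> 'a metric set \<Rightarrow> bool" where
  "Pgood \<X> s \<Y> \<longleftrightarrow> (\<forall>X\<in>\<X>. \<exists>\<U>::nat \<Rightarrow> 'a metric set.
        (\<forall>i\<in>{1..length s}. \<U> i \<subseteq> \<Y> \<and> (\<forall>U\<in>\<U> i. is_subspace U X) \<and> r_disjoint (real (s!(i-1))) X (\<U> i))
        \<and> mspace X \<subseteq> (\<Union>i\<in>{1..length s}. \<Union>U\<in>\<U> i. mspace U))"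

lemma Pgood_dec:
  assumes "Pgood \<X> s \<Y>" "\<forall>i\<in>{1..length s}. R i \<le> real (s!(i-1))"
  shows "decomposes \<X> R \<Y>"
  unfolding decomposes_def
proof (intro exI[of _ "length s"] ballI)
  fix X assume "X \<in> \<X>"
  have "\<exists>\<U>::nat \<Rightarrow> 'a metric set. (\<forall>i\<in>{1..length s}. \<U> i \<subseteq> \<Y> \<and> (\<forall>U\<in>\<U> i. is_subspace U X) \<and> r_disjoint (real (s!(i-1))) X (\<U> i))
    \<and> mspace X \<subseteq> (\<Union>i\<in>{1..length s}. \<Union>U\<in>\<U> i. mspace U)"
    using assms(1) \<open>X \<in> \<X>\<close> unfolding Pgood_def by (rule bspec)
  then obtain \<U> where UU: "(\<forall>i\<in>{1..length s}. \<U> i \<subseteq> \<Y> \<and> (\<forall>U\<in>\<U> i. is_subspace U X) \<and> r_disjoint (real (s!(i-1))) X (\<U> i))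
    \<and> mspace X \<subseteq> (\<Union>i\<in>{1..length s}. \<Union>U\<in>\<U> i. mspace U)" by (rule exE)
  show "\<exists>\<U>::nat \<Rightarrow> 'a metric set.
        (\<forall>i\<in>{1..length s}. \<U> i \<subseteq> \<Y> \<and> (\<forall>U\<in>\<U> i. is_subspace U X) \<and> r_disjoint (R i) X (\<U> i))
        \<and> mspace X \<subseteq> (\<Union>i\<in>{1..length s}. \<Union>U\<in>\<U> i. mspace U)"
  proof (intro exI[of _ \<U>] conjI ballI)
    fix i assume i: "i \<in> {1..length s}"
    have Ui: "\<U> i \<subseteq> \<Y> \<and> (\<forall>U\<in>\<U> i. is_subspace U X) \<and> r_disjoint (real (s!(i-1))) X (\<U> i)"
      using conjunct1[OF UU] i by (rule bspec)
    have sii: "R i \<le> real (s!(i-1))" using assms(2) i by (rule bspec)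
    show "\<U> i \<subseteq> \<Y>" using Ui by (rule conjunct1)
    show "\<And>U. U \<in> \<U> i \<Longrightarrow> is_subspace U X" using Ui by simp
    show "r_disjoint (R i) X (\<U> i)"
      using r_disjoint_mono[of "R i" "real (s!(i-1))" X "\<U> i"] sii Ui by simp
  next
    show "mspace X \<subseteq> (\<Union>i\<in>{1..length s}. \<Union>U\<in>\<U> i. mspace U)" using UU by (rule conjunct2)
  qed
qed

theorem lemma3p6:
  fixes \<alpha> :: "'o::wellorder" and \<X> :: "'a metric set"
  assumes "\<exists>\<beta>. \<beta> < \<alpha>"
    and "\<X> \<in> C_class \<alpha>"
  shows "\<exists>\<Y>::nat \<Rightarrow> 'a metric set. \<forall>R::nat \<Rightarrow> real. \<exists>n.
           decomposes \<X> R (\<Y> n) \<and> (\<exists>\<beta>. \<beta> < \<alpha> \<and> \<Y> n \<in> (C_class \<beta> :: 'a metric set set))"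
proof -
  define Q where "Q = (\<lambda>s (Y::'a metric set). Pgood \<X> s Y \<and> (\<exists>\<beta>. \<beta> < \<alpha> \<and> Y \<in> (C_class \<beta> :: 'a metric set set)))"
  define F where "F = (\<lambda>n::nat. SOME Y. Q (from_nat n :: nat list) Y)"
  have main: "\<forall>R::nat \<Rightarrow> real. \<exists>n.
           decomposes \<X> R (F n) \<and> (\<exists>\<beta>. \<beta> < \<alpha> \<and> F n \<in> (C_class \<beta> :: 'a metric set set))"
  proof
    fix R :: "nat \<Rightarrow> real"
    define R' where "R' = (\<lambda>i. max (R i) 0 + 1)"
    have "\<X> \<in> {\<X>. \<forall>R. \<exists>\<beta>. \<beta> < \<alpha> \<and> (\<exists>\<Y>. \<Y> \<in> (C_class \<beta> :: 'a metric set set) \<and> decomposes \<X> R \<Y>)}"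
      proof -
        have "\<not> (\<forall>\<beta>. \<not> \<beta> < \<alpha>)" using assms(1) by blast
        then have "C_class \<alpha> = {\<X>. \<forall>R. \<exists>\<beta>. \<beta> < \<alpha> \<and> (\<exists>\<Y>. \<Y> \<in> (C_class \<beta> :: 'a metric set set) \<and> decomposes \<X> R \<Y>)}"
          using C_class_unfold[of \<alpha>] by (simp only: if_False)
        then show ?thesis using assms(2) by simp
      qed
    then have "\<exists>\<beta>. \<beta> < \<alpha> \<and> (\<exists>\<Y>. \<Y> \<in> (C_class \<beta> :: 'a metric set set) \<and> decomposes \<X> R' \<Y>)" by simp
    then obtain \<beta> \<Y> where b: "\<beta> < \<alpha>" "\<Y> \<in> (C_class \<beta> :: 'a metric set set)" "decomposes \<X> R' \<Y>" by blast
    from b(3) obtain k where k: "\<forall>X\<in>\<X>. \<exists>\<U>::nat \<Rightarrow> 'a metric set.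
        (\<forall>i\<in>{1..k}. \<U> i \<subseteq> \<Y> \<and> (\<forall>U\<in>\<U> i. is_subspace U X) \<and> r_disjoint (R' i) X (\<U> i))
        \<and> mspace X \<subseteq> (\<Union>i\<in>{1..k}. \<Union>U\<in>\<U> i. mspace U)"
      unfolding decomposes_def by (rule exE)
    define s where "s = map (\<lambda>i. nat \<lceil>R (Suc i)\<rceil>) [0..<k]"
    have ls: "length s = k" by (simp add: s_def)
    have si: "\<forall>i\<in>{1..k}. R i \<le> real (s!(i-1)) \<and> real (s!(i-1)) \<le> R' i"
    proof
      fix i assume i: "i \<in> {1..k}"
      then have i1: "i - 1 < k" "Suc (i - 1) = i" by auto
      have "s!(i-1) = nat \<lceil>R (Suc (i-1))\<rceil>" unfolding s_def
        using i1(1) by (simp del: upt_Suc)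
      then have "s!(i-1) = nat \<lceil>R i\<rceil>" using i1(2) by simp
      then show "R i \<le> real (s!(i-1)) \<and> real (s!(i-1)) \<le> R' i"
      proof -
        have "R i \<le> of_int \<lceil>R i\<rceil>" by (rule le_of_int_ceiling)
        also have "\<dots> \<le> real (nat \<lceil>R i\<rceil>)" by simp
        finally have 1: "R i \<le> real (nat \<lceil>R i\<rceil>)" .
        have 2: "real (nat \<lceil>R i\<rceil>) \<le> R' i"
        proof (cases "R i \<le> 0")
          case True
          then have "\<lceil>R i\<rceil> \<le> 0" by (simp add: ceiling_le_zero)
          then show ?thesis unfolding R'_def by simp
        next
          case False
          then have "real (nat \<lceil>R i\<rceil>) = of_int \<lceil>R i\<rceil>" by simp
          also have "\<dots> \<le> R i + 1" by (rule of_int_ceiling_le_add_one)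
          finally show ?thesis unfolding R'_def using False by simp
        qed
        show ?thesis using 1 2 \<open>s!(i-1) = nat \<lceil>R i\<rceil>\<close> by simp
      qed
    qed
    have "Pgood \<X> s \<Y>" unfolding Pgood_def ls
    proof
      fix X assume "X \<in> \<X>"
      with k have "\<exists>\<U>::nat \<Rightarrow> 'a metric set.
        (\<forall>i\<in>{1..k}. \<U> i \<subseteq> \<Y> \<and> (\<forall>U\<in>\<U> i. is_subspace U X) \<and> r_disjoint (R' i) X (\<U> i))
        \<and> mspace X \<subseteq> (\<Union>i\<in>{1..k}. \<Union>U\<in>\<U> i. mspace U)" by (rule bspec)
      then obtain \<U> where UU: "(\<forall>i\<in>{1..k}. \<U> i \<subseteq> \<Y> \<and> (\<forall>U\<in>\<U> i. is_subspace U X) \<and> r_disjoint (R' i) X (\<U> i))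
        \<and> mspace X \<subseteq> (\<Union>i\<in>{1..k}. \<Union>U\<in>\<U> i. mspace U)" by (rule exE)
      then have U: "\<forall>i\<in>{1..k}. \<U> i \<subseteq> \<Y> \<and> (\<forall>U\<in>\<U> i. is_subspace U X) \<and> r_disjoint (R' i) X (\<U> i)"
        "mspace X \<subseteq> (\<Union>i\<in>{1..k}. \<Union>U\<in>\<U> i. mspace U)" by (rule conjunct1, rule conjunct2)
      then show "\<exists>\<U>::nat \<Rightarrow> 'a metric set.
        (\<forall>i\<in>{1..k}. \<U> i \<subseteq> \<Y> \<and> (\<forall>U\<in>\<U> i. is_subspace U X) \<and> r_disjoint (real (s!(i-1))) X (\<U> i))
        \<and> mspace X \<subseteq> (\<Union>i\<in>{1..k}. \<Union>U\<in>\<U> i. mspace U)"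
      proof (intro exI[of _ \<U>] conjI ballI)
        fix i assume i: "i \<in> {1..k}"
        have Ui: "\<U> i \<subseteq> \<Y> \<and> (\<forall>U\<in>\<U> i. is_subspace U X) \<and> r_disjoint (R' i) X (\<U> i)"
          using U(1) i by (rule bspec)
        have sii: "R i \<le> real (s!(i-1)) \<and> real (s!(i-1)) \<le> R' i" using si i by (rule bspec)
        show "\<U> i \<subseteq> \<Y>" using Ui by (rule conjunct1)
        show "\<And>U. U \<in> \<U> i \<Longrightarrow> is_subspace U X" using Ui by simp
        show "r_disjoint (real (s!(i-1))) X (\<U> i)"
          using r_disjoint_mono[of "real (s!(i-1))" "R' i" X "\<U> i"] sii Ui by simp
      next
        show "mspace X \<subseteq> (\<Union>i\<in>{1..k}. \<Union>U\<in>\<U> i. mspace U)" by (rule U(2))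
      qed
    qed
    then have "Q s \<Y>" unfolding Q_def using b(1,2) by auto
    then have "Q (from_nat (to_nat s)) \<Y>" by simp
    then have "Q (from_nat (to_nat s)) (F (to_nat s))" unfolding F_def by (rule someI)
    then have "Q s (F (to_nat s))" by simp
    then show "\<exists>n. decomposes \<X> R (F n) \<and> (\<exists>\<beta>. \<beta> < \<alpha> \<and> F n \<in> (C_class \<beta> :: 'a metric set set))"
    proof (intro exI[of _ "to_nat s"] conjI)
      show "decomposes \<X> R (F (to_nat s))"
      proof (rule Pgood_dec)
        show "Pgood \<X> s (F (to_nat s))" using \<open>Q s (F (to_nat s))\<close> unfolding Q_def by (rule conjunct1)
        show "\<forall>i\<in>{1..length s}. R i \<le> real (s!(i-1))" using si unfolding ls by simp
      qed
      show "\<exists>\<beta>. \<beta> < \<alpha> \<and> F (to_nat s) \<in> (C_class \<beta> :: 'a metric set set)"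
        using \<open>Q s (F (to_nat s))\<close> unfolding Q_def by (rule conjunct2)
    qed
  qed
  then show ?thesis by (rule exI[of _ F])
qed

end
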